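(* Let $k\ge1$ and let $p=(p_1,\dots,p_n)$ be a parking function. Then the permutation $\pi(p)$ avoids the pattern $(k+1)k\cdots1$ if and only if the word $p_1\cdots p_n$ avoids $(k+1)k\cdots 1$ as a word, i.e. there are no indices $i_1<\dots<i_{k+1}$ with $p_{i_1}>p_{i_2}>\dots>p_{i_{k+1}}$.
   Context: $[n]=\{1,\dots,n\}$. A tuple $p\in[n]^n$ is a parking function if its weakly increasing rearrangement $(p'_1,\dots,p'_n)$ satisfies $p'_i\le i$ for all $i$. $\pi(p)$ is the permutation obtained by listing, for $s=1,\dots,n$ in turn, the indices $j$ with $p_j=s$ in increasing order, and concatenating. A permutation avoids $\sigma\in\mathfrak S_m$ if none of its length-$m$ subsequences is order-isomorphic to $\sigma$. *)

theory Defs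
  imports Main "HOL-Library.Sublist"
begin

text \<open>A tuple p in [n]^n is represented as a list of length n; p_i is p ! (i - 1).\<close>

definition parking_function :: "nat list \<Rightarrow> bool" where
  "parking_function p \<longleftrightarrow>
     (\<forall>x \<in> set p. 1 \<le> x \<and> x \<le> length p) \<and>
     (\<forall>i < length p. sort p ! i \<le> i + 1)"

definition perm_of_pf :: "nat list \<Rightarrow> nat list" where
  "perm_of_pf p = concat (map (\<lambda>s. filter (\<lambda>j. p ! (j - 1) = s) [1..<length p + 1])
                              [1..<length p + 1])"

definition order_iso :: "nat list \<Rightarrow> nat list \<Rightarrow> bool" where
  "order_iso xs ys \<longleftrightarrow> length xs = length ys \<and>
     (\<forall>i < length xs. \<forall>j < length xs. (xs ! i < xs ! j \<longleftrightarrow> ys ! i < ys ! j))"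

definition avoids :: "nat list \<Rightarrow> nat list \<Rightarrow> bool" where
  "avoids w \<sigma> \<longleftrightarrow> \<not> (\<exists>ys. subseq ys w \<and> length ys = length \<sigma> \<and> order_iso ys \<sigma>)"

definition dec_pattern :: "nat \<Rightarrow> nat list" where
  "dec_pattern k = rev [1..<k + 2]"

end

theory Submission
  imports Defs
begin

definition keyR :: "nat list \<Rightarrow> nat \<Rightarrow> nat \<Rightarrow> bool" where
  "keyR p x y \<longleftrightarrow> p ! (x - 1) < p ! (y - 1) \<or> (p ! (x - 1) = p ! (y - 1) \<and> x < y)"

lemma sorted_concat_filter:
  assumes "sorted_wrt (<) ss" "sorted_wrt (<) xs"
  shows "sorted_wrt (\<lambda>x y. f x < f y \<or> (f x = f y \<and> x < y))
           (concat (map (\<lambda>s. filter (\<lambda>j. f j = s) xs) ss))"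
  using assms(1)
proof (induction ss)
  case Nil then show ?case by simp
next
  case (Cons s ss)
  have a: "sorted_wrt (<) (filter (\<lambda>j. f j = s) xs)"
    using assms(2) by (simp add: sorted_wrt_filter)
  have b: "sorted_wrt (\<lambda>x y. f x < f y \<or> (f x = f y \<and> x < y)) (filter (\<lambda>j. f j = s) xs)"
    by (rule sorted_wrt_mono_rel[OF _ a]) auto
  show ?case using Cons b by (auto simp: sorted_wrt_append)
qed

lemma L_sorted: "sorted_wrt (keyR p) (perm_of_pf p)"
  unfolding perm_of_pf_def keyR_def
  by (rule sorted_concat_filter[where f="\<lambda>j. p ! (j - 1)"]) (simp_all only: sorted_wrt_upt)

lemma L_set: "set (perm_of_pf p) = {j. 1 \<le> j \<and> j \<le> length p \<and> 1 \<le> p ! (j - 1) \<and> p ! (j - 1) \<le> length p}"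
  unfolding perm_of_pf_def by (auto simp del: upt_Suc)

lemma sorted_wrt_subseq: "subseq xs ys \<Longrightarrow> sorted_wrt R ys \<Longrightarrow> sorted_wrt R xs"
  by (induction rule: list_emb.induct) (auto dest: list_emb_set)

lemma subseq_of_sorted:
  assumes "sorted_wrt R L" "sorted_wrt R ys" "set ys \<subseteq> set L"
    and asym: "\<And>a b. R a b \<Longrightarrow> \<not> R b a"
  shows "subseq ys L"
  using assms(1-3)
proof (induction L arbitrary: ys)
  case Nil then show ?case by simp
next
  case (Cons x L)
  show ?case
  proof (cases ys)
    case Nil then show ?thesis by simp
  next
    case (Cons y ys')
    show ?thesis
    proof (cases "y = x")
      case True
      have "set ys' \<subseteq> set L"
      proof
        fix z assume "z \<in> set ys'"
        then have "R y z" using Cons \<open>sorted_wrt R ys\<close> by auto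
        then have "z \<noteq> x" using True asym by blast
        then show "z \<in> set L" using \<open>z \<in> set ys'\<close> Cons \<open>set ys \<subseteq> set (x # L)\<close> by auto
      qed
      then have "subseq ys' L" using Cons.IH[of ys'] Cons.prems \<open>ys = y # ys'\<close> by simp
      then show ?thesis using True \<open>ys = y # ys'\<close> by simp
    next
      case False
      have yL: "y \<in> set L" using False Cons.prems \<open>ys = y # ys'\<close> by auto
      then have Rxy: "R x y" using Cons.prems by auto
      have "set ys \<subseteq> set L"
      proof
        fix z assume z: "z \<in> set ys"
        show "z \<in> set L"
        proof (cases "z = y")
          case True then show ?thesis using yL by simp
        next
          case False
          then have "z \<in> set ys'" using z \<open>ys = y # ys'\<close> by auto
          then have "R y z" using \<open>ys = y # ys'\<close> \<open>sorted_wrt R ys\<close> by auto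
          then have "z \<noteq> x" using Rxy asym by blast
          then show ?thesis using z Cons.prems by auto
        qed
      qed
      then have "subseq ys L" using Cons.IH Cons.prems by simp
      then show ?thesis by (rule list_emb_Cons)
    qed
  qed
qed

lemma dec_nth: "a < k + 1 \<Longrightarrow> dec_pattern k ! a = k + 1 - a"
  unfolding dec_pattern_def by (simp add: rev_nth del: upt_Suc)

lemma iso_dec: "length ys = k + 1 \<Longrightarrow> order_iso ys (dec_pattern k) \<longleftrightarrow> sorted_wrt (>) ys"
  unfolding order_iso_def sorted_wrt_iff_nth_less
proof (intro iffI allI impI)
  assume l: "length ys = k + 1"
  { fix i j assume "length ys = length (dec_pattern k) \<and> (\<forall>i<length ys. \<forall>j<length ys. (ys ! i < ys ! j) = (dec_pattern k ! i < dec_pattern k ! j))"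
      "i < j" "j < length ys"
    then show "ys ! j < ys ! i" using l by (auto simp: dec_nth) }
next
  assume l: "length ys = k + 1" and s: "\<forall>i j. i < j \<longrightarrow> j < length ys \<longrightarrow> ys ! j < ys ! i"
  show "length ys = length (dec_pattern k) \<and> (\<forall>i<length ys. \<forall>j<length ys. (ys ! i < ys ! j) = (dec_pattern k ! i < dec_pattern k ! j))"
  proof (intro conjI allI impI)
    show "length ys = length (dec_pattern k)" using l by (simp add: dec_pattern_def)
    fix i j assume i: "i < length ys" and j: "j < length ys"
    have "(ys ! i < ys ! j) \<longleftrightarrow> j < i"
      using s i j by (metis less_asym linorder_neqE_nat)
    then show "(ys ! i < ys ! j) = (dec_pattern k ! i < dec_pattern k ! j)"
      using i j l by (auto simp: dec_nth)
  qed
qed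

lemma mono_i:
  assumes "\<forall>j < k. i j < (i (Suc j) :: nat)" "a \<le> b" "b \<le> k"
  shows "i a \<le> i b"
  using assms(2,3)
proof (induction b)
  case 0 then show ?case by simp
next
  case (Suc b)
  show ?case
  proof (cases "a = Suc b")
    case False
    then have "i a \<le> i b" using Suc by simp
    moreover have "i b < i (Suc b)" using assms(1) Suc.prems by simp
    ultimately show ?thesis by simp
  qed simp
qed

theorem corollary2p10:
  fixes k :: nat and p :: "nat list"
  assumes "k \<ge> 1" and "parking_function p"
  shows "avoids (perm_of_pf p) (dec_pattern k) \<longleftrightarrow>
    \<not> (\<exists>i :: nat \<Rightarrow> nat.
          1 \<le> i 0 \<and> i k \<le> length p \<and>
          (\<forall>j < k. i j < i (Suc j) \<and> p ! (i j - 1) > p ! (i (Suc j) - 1)))"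
proof
  assume av: "avoids (perm_of_pf p) (dec_pattern k)"
  show "\<not> (\<exists>i :: nat \<Rightarrow> nat.
          1 \<le> i 0 \<and> i k \<le> length p \<and>
          (\<forall>j < k. i j < i (Suc j) \<and> p ! (i j - 1) > p ! (i (Suc j) - 1)))"
  proof
    assume "\<exists>i :: nat \<Rightarrow> nat.
          1 \<le> i 0 \<and> i k \<le> length p \<and>
          (\<forall>j < k. i j < i (Suc j) \<and> p ! (i j - 1) > p ! (i (Suc j) - 1))"
    then obtain i where i0: "1 \<le> i 0" and ik: "i k \<le> length p"
      and ij: "\<forall>j < k. i j < i (Suc j) \<and> p ! (i j - 1) > p ! (i (Suc j) - 1)" by blast
    define ys where "ys = map (\<lambda>t. i (k - t)) [0..<k+1]"
    have len: "length ys = k + 1" by (simp add: ys_def)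
    have ysn: "\<And>a. a < k + 1 \<Longrightarrow> ys ! a = i (k - a)" by (simp add: ys_def nth_append del: upt_Suc)
    have step: "\<And>a. a < k \<Longrightarrow> ys ! a > ys ! (Suc a) \<and> keyR p (ys ! a) (ys ! Suc a)"
    proof -
      fix a assume a: "a < k"
      have "k - a = Suc (k - Suc a)" using a by simp
      then show "ys ! a > ys ! (Suc a) \<and> keyR p (ys ! a) (ys ! Suc a)"
        using ij a ysn[of a] ysn[of "Suc a"] by (auto simp: keyR_def)
    qed
    have trans1: "transp ((>) :: nat \<Rightarrow> nat \<Rightarrow> bool)" by (auto simp: transp_def)
    have "sorted_wrt (>) ys"
      using len step by (subst sorted_wrt_iff_nth_Suc_transp[OF trans1]) auto
    moreover have s2: "sorted_wrt (keyR p) ys"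
    proof -
      have t: "transp (keyR p)" unfolding transp_def keyR_def by auto
      show ?thesis using len step by (subst sorted_wrt_iff_nth_Suc_transp[OF t]) auto
    qed
    moreover have s3: "set ys \<subseteq> set (perm_of_pf p)"
    proof
      fix z assume "z \<in> set ys"
      then obtain a where a: "a < k + 1" "z = i (k - a)" using len ysn by (metis in_set_conv_nth)
      have "i 0 \<le> z" "z \<le> i k" using mono_i[of k i] ij a by auto
      then have z: "1 \<le> z" "z \<le> length p" using i0 ik by auto
      then have "p ! (z - 1) \<in> set p" by simp
      then show "z \<in> set (perm_of_pf p)" using assms(2) z unfolding L_set parking_function_def by auto
    qed
    have "subseq ys (perm_of_pf p)"
    proof -
      have "\<And>a b. keyR p a b \<Longrightarrow> \<not> keyR p b a" by (auto simp: keyR_def)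
      then show ?thesis using subseq_of_sorted[OF L_sorted s2 s3] by blast
    qed
    then show False using av len iso_dec[OF len] \<open>sorted_wrt (>) ys\<close>
      unfolding avoids_def by (auto simp: dec_pattern_def)
  qed
next
  assume nw: "\<not> (\<exists>i :: nat \<Rightarrow> nat.
          1 \<le> i 0 \<and> i k \<le> length p \<and>
          (\<forall>j < k. i j < i (Suc j) \<and> p ! (i j - 1) > p ! (i (Suc j) - 1)))"
  show "avoids (perm_of_pf p) (dec_pattern k)"
    unfolding avoids_def
  proof
    assume "\<exists>ys. subseq ys (perm_of_pf p) \<and> length ys = length (dec_pattern k) \<and> order_iso ys (dec_pattern k)"
    then obtain ys where sub: "subseq ys (perm_of_pf p)" and len: "length ys = k + 1"
      and iso: "order_iso ys (dec_pattern k)" by (auto simp: dec_pattern_def)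
    have dec: "sorted_wrt (>) ys" using iso iso_dec[OF len] by simp
    have srt: "sorted_wrt (keyR p) ys" using sub L_sorted sorted_wrt_subseq by blast
    have st: "set ys \<subseteq> set (perm_of_pf p)" using sub by (auto dest: list_emb_set)
    define i where "i = (\<lambda>j. ys ! (k - j))"
    have inr: "\<And>a. a < k + 1 \<Longrightarrow> 1 \<le> ys ! a \<and> ys ! a \<le> length p"
    proof -
      fix a assume "a < k + 1"
      then have "ys ! a \<in> set ys" using len by simp
      then have "ys ! a \<in> set (perm_of_pf p)" using st by blast
      then show "1 \<le> ys ! a \<and> ys ! a \<le> length p" by (simp add: L_set)
    qed
    have "1 \<le> i 0 \<and> i k \<le> length p \<and>
          (\<forall>j < k. i j < i (Suc j) \<and> p ! (i j - 1) > p ! (i (Suc j) - 1))"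
    proof (intro conjI allI impI)
      show "1 \<le> i 0" using inr[of k] by (simp add: i_def)
      show "i k \<le> length p" using inr[of 0] by (simp add: i_def)
    next
      fix j assume j: "j < k"
      have e: "k - j = Suc (k - Suc j)" using j by simp
      have "ys ! (k - Suc j) > ys ! (k - j)"
        using dec len j e by (simp add: sorted_wrt_iff_nth_less)
      moreover have "keyR p (ys ! (k - Suc j)) (ys ! (k - j))"
        using srt len j e by (simp add: sorted_wrt_iff_nth_less)
      ultimately show "i j < i (Suc j)" "p ! (i j - 1) > p ! (i (Suc j) - 1)"
        by (auto simp: i_def keyR_def)
    qed
    then have "\<exists>i :: nat \<Rightarrow> nat.
          1 \<le> i 0 \<and> i k \<le> length p \<and>
          (\<forall>j < k. i j < i (Suc j) \<and> p ! (i j - 1) > p ! (i (Suc j) - 1))" by (rule exI[where x=i])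
    with nw show False by contradiction
  qed
qed

end
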